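(* Let $\mathbb H$ be a separable Hilbert space with inner product $\langle\cdot,\cdot\rangle$, let $g,\nu\in\mathbb H$ with $g\neq 0$ and $\|\nu\|_{\mathbb H}=1$, and let $\mathcal A\in\mathcal L(\mathbb H)$ be a bounded linear operator, with uniformly continuous semigroup $\{e^{t\mathcal A},t\in[0,T]\}$. Let $K(t)=\langle g,e^{t\mathcal A}\nu\rangle$, $t\in[0,T]$. For $u\in L^2_a$ let $X^u$ be the solution of $$X^u(t)=X(0)+\int_0^t K(t-s)\big(\alpha u(s)-\beta X^u(s)\big)ds+\sigma\int_0^t K(t-s)\,dW(s),\quad t\in[0,T].$$ Set $\zeta_0:=\frac{X(0)}{\|g\|_{\mathbb H}^2}g$ and let $\bar{\mathcal A}\in\mathcal L(\mathbb H)$ be given by $\bar{\mathcal A}z:=\mathcal Az-\beta\langle g,z\rangle\nu$, $z\in\mathbb H$. Let $\{\mathcal Z^u_t,t\in[0,T]\}$ be the $\mathbb H$-valued process $$\mathcal Z^u_t=\int_0^t\Big(\bar{\mathcal A}\mathcal Z^u_s-\nu\beta\langle g,\zeta_0\rangle+\nu\alpha u(s)\Big)ds+\int_0^t\sigma\nu\,dW(s).$$ Then for any $t\in[0,T]$, $X^u(t)=\langle g,\zeta_0\rangle+\langle g,\mathcal Z^u_t\rangle$.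
   Context: Fix $T>0$ and constants $\alpha,\beta,\sigma>0$, $X(0)\in\mathbb R$. Let $W$ be a standard one-dimensional Brownian motion on $(\Omega,\mathcal F,\mathbb P)$. $L^2_a$ denotes the space of real-valued square-integrable processes on $\Omega\times[0,T]$ adapted to the filtration generated by $W$. *)

theory Defs
  imports "HOL-Analysis.Analysis" "HOL-Probability.Probability"
begin

definition op_exp :: "('h::banach \<Rightarrow>\<^sub>L 'h) \<Rightarrow> ('h \<Rightarrow>\<^sub>L 'h)" where
  "op_exp B = (\<Sum>n. (1 / fact n) *\<^sub>R (((\<lambda>C. B o\<^sub>L C) ^^ n) id_blinfun))"

definition std_brownian_motion :: "'w measure \<Rightarrow> ('w \<Rightarrow> real \<Rightarrow> real) \<Rightarrow> bool" where
  "std_brownian_motion M W \<longleftrightarrow>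
     prob_space M \<and>
     (\<forall>t. (\<lambda>w. W w t) \<in> borel_measurable M) \<and>
     (AE w in M. W w 0 = 0 \<and> continuous_on {0..} (W w)) \<and>
     (\<forall>s t. 0 \<le> s \<and> s < t \<longrightarrow>
        distributed M lborel (\<lambda>w. W w t - W w s) (normal_density 0 (sqrt (t - s)))) \<and>
     (\<forall>(ts::nat \<Rightarrow> real) n. 0 \<le> ts 0 \<and> (\<forall>i<n. ts i \<le> ts (Suc i)) \<longrightarrow>
        prob_space.indep_vars M (\<lambda>_. borel) (\<lambda>i w. W w (ts (Suc i)) - W w (ts i)) {..<n})"

definition nat_filtration :: "'w measure \<Rightarrow> ('w \<Rightarrow> real \<Rightarrow> real) \<Rightarrow> real \<Rightarrow> 'w measure" where
  "nat_filtration M W t = sigma (space M)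
     {(\<lambda>w. W w s) -` B \<inter> space M | s B. s \<in> {0..t} \<and> B \<in> sets borel}"

definition L2a :: "'w measure \<Rightarrow> ('w \<Rightarrow> real \<Rightarrow> real) \<Rightarrow> real \<Rightarrow> ('w \<Rightarrow> real \<Rightarrow> real) \<Rightarrow> bool" where
  "L2a M W T u \<longleftrightarrow>
     (\<lambda>(w, s). u w s) \<in> borel_measurable (M \<Otimes>\<^sub>M lborel) \<and>
     (\<integral>\<^sup>+ (w, s). indicator {0..T} s * ennreal ((u w s)\<^sup>2) \<partial>(M \<Otimes>\<^sub>M lborel)) < \<infinity> \<and>
     (\<forall>t\<in>{0..T}. (\<lambda>w. u w t) \<in> borel_measurable (nat_filtration M W t))"

text \<open>Pathwise (Ito / left-point Riemann-Stieltjes) integral of a deterministic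
  integrand f against a path w over [a,b]: limit of left-point sums as the mesh tends to 0.\<close>
definition has_stoch_integral ::
  "(real \<Rightarrow> 'b::real_normed_vector) \<Rightarrow> (real \<Rightarrow> real) \<Rightarrow> real \<Rightarrow> real \<Rightarrow> 'b \<Rightarrow> bool" where
  "has_stoch_integral f w a b I \<longleftrightarrow>
     (\<forall>e>0. \<exists>d>0. \<forall>(p::nat \<Rightarrow> real) n.
        p 0 = a \<and> p n = b \<and> (\<forall>i<n. p i < p (Suc i) \<and> p (Suc i) - p i < d) \<longrightarrow>
        norm ((\<Sum>i<n. (w (p (Suc i)) - w (p i)) *\<^sub>R f (p i)) - I) < e)"

end

theory Submission
  imports Defs
begin

definition Pw :: "('h::banach \<Rightarrow>\<^sub>L 'h) \<Rightarrow> nat \<Rightarrow> ('h \<Rightarrow>\<^sub>L 'h)" where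
  "Pw A n = ((\<lambda>C. A o\<^sub>L C) ^^ n) id_blinfun"

lemma Pw_apply: "blinfun_apply (Pw A n) z = (blinfun_apply A ^^ n) z"
  by (induction n arbitrary: z) (auto simp: Pw_def)

lemma Pw_norm: "norm (Pw A n) \<le> norm A ^ n"
proof (induction n)
  case 0
  then show ?case by (simp add: Pw_def norm_blinfun_id_le)
next
  case (Suc n)
  have "norm (Pw A (Suc n)) = norm (A o\<^sub>L Pw A n)" by (simp add: Pw_def)
  also have "\<dots> \<le> norm A * norm (Pw A n)" by (rule norm_blinfun_compose)
  also have "\<dots> \<le> norm A * norm A ^ n" using Suc by (simp add: mult_left_mono)
  finally show ?case by simp
qed

lemma Pw_scale: "((\<lambda>C. (t *\<^sub>R A) o\<^sub>L C) ^^ n) id_blinfun = (t ^ n) *\<^sub>R Pw A n"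
proof (induction n)
  case 0
  then show ?case by (simp add: Pw_def)
next
  case (Suc n)
  show ?case
    by (rule blinfun_eqI) (simp add: Suc Pw_def blinfun.scaleR_left blinfun.scaleR_right)
qed

lemma Pw_Suc_apply: "blinfun_apply (Pw A (Suc n)) z = blinfun_apply (Pw A n) (blinfun_apply A z)"
  by (simp add: Pw_apply funpow_swap1)

lemma op_exp_eq: "op_exp (t *\<^sub>R A) = (\<Sum>n. (t ^ n / fact n) *\<^sub>R Pw A n)"
  unfolding op_exp_def Pw_scale by simp

lemma op_exp_summable:
  fixes A :: "'h::banach \<Rightarrow>\<^sub>L 'h"
  shows "summable (\<lambda>n. (t ^ n / fact n) *\<^sub>R Pw A n)"
proof (rule summable_norm_cancel, rule summable_comparison_test')
  show "summable (\<lambda>n. (\<bar>t\<bar> * norm A) ^ n / fact n)"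
    using summable_exp[of "\<bar>t\<bar> * norm A"] by (simp add: field_simps)
  fix n
  have "norm (norm ((t ^ n / fact n) *\<^sub>R Pw A n)) = \<bar>t\<bar> ^ n / fact n * norm (Pw A n)"
    by (simp add: power_abs)
  also have "\<dots> \<le> \<bar>t\<bar> ^ n / fact n * norm A ^ n"
    by (intro mult_left_mono Pw_norm) auto
  also have "\<dots> = (\<bar>t\<bar> * norm A) ^ n / fact n" by (simp add: power_mult_distrib)
  finally show "norm (norm ((t ^ n / fact n) *\<^sub>R Pw A n)) \<le> (\<bar>t\<bar> * norm A) ^ n / fact n" .
qed

definition kc :: "'h::{real_inner,banach} \<Rightarrow> ('h \<Rightarrow>\<^sub>L 'h) \<Rightarrow> 'h \<Rightarrow> nat \<Rightarrow> real" where
  "kc g A z n = (g \<bullet> blinfun_apply (Pw A n) z) / fact n"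

lemma kc_bound: "\<bar>kc g A z n\<bar> \<le> norm g * norm z * norm A ^ n / fact n"
proof -
  have "\<bar>g \<bullet> blinfun_apply (Pw A n) z\<bar> \<le> norm g * norm (blinfun_apply (Pw A n) z)"
    by (rule Cauchy_Schwarz_ineq2)
  also have "\<dots> \<le> norm g * (norm (Pw A n) * norm z)"
    by (intro mult_left_mono norm_blinfun) auto
  also have "\<dots> \<le> norm g * (norm A ^ n * norm z)"
    by (intro mult_left_mono mult_right_mono Pw_norm) auto
  finally show ?thesis unfolding kc_def by (simp add: divide_right_mono field_simps)
qed

lemma kc_summable: "summable (\<lambda>n. kc g A z n * y ^ n)"
proof (rule summable_norm_cancel, rule summable_comparison_test')
  show "summable (\<lambda>n. norm g * norm z * ((\<bar>y\<bar> * norm A) ^ n / fact n))"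
    using summable_exp[of "\<bar>y\<bar> * norm A"] by (intro summable_mult) (simp add: field_simps)
  fix n
  have "norm (norm (kc g A z n * y ^ n)) = \<bar>kc g A z n\<bar> * \<bar>y\<bar> ^ n" by (simp add: abs_mult power_abs)
  also have "\<dots> \<le> norm g * norm z * norm A ^ n / fact n * \<bar>y\<bar> ^ n"
    by (intro mult_right_mono kc_bound) auto
  also have "\<dots> = norm g * norm z * ((\<bar>y\<bar> * norm A) ^ n / fact n)" by (simp add: power_mult_distrib)
  finally show "norm (norm (kc g A z n * y ^ n)) \<le> norm g * norm z * ((\<bar>y\<bar> * norm A) ^ n / fact n)" .
qed

lemma k_series: "g \<bullet> blinfun_apply (op_exp (t *\<^sub>R A)) z = (\<Sum>n. kc g A z n * t ^ n)"
proof -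
  have s: "summable (\<lambda>n. (t ^ n / fact n) *\<^sub>R Pw A n)" by (rule op_exp_summable)
  have "blinfun_apply (op_exp (t *\<^sub>R A)) z = (\<Sum>n. blinfun_apply ((t ^ n / fact n) *\<^sub>R Pw A n) z)"
    unfolding op_exp_eq by (rule bounded_linear.suminf[OF blinfun.bounded_linear_left s])
  moreover have s2: "summable (\<lambda>n. blinfun_apply ((t ^ n / fact n) *\<^sub>R Pw A n) z)"
    by (rule bounded_linear.summable[OF blinfun.bounded_linear_left s])
  ultimately have "g \<bullet> blinfun_apply (op_exp (t *\<^sub>R A)) z = (\<Sum>n. g \<bullet> blinfun_apply ((t ^ n / fact n) *\<^sub>R Pw A n) z)"
    using bounded_linear.suminf[OF bounded_linear_inner_right s2] by simp
  also have "\<dots> = (\<Sum>n. kc g A z n * t ^ n)"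
    by (intro suminf_cong) (simp add: kc_def blinfun.scaleR_left)
  finally show ?thesis .
qed

lemma kc_diffs: "diffs (kc g A z) = kc g A (blinfun_apply A z)"
proof
  fix n
  have "diffs (kc g A z) n = of_nat (Suc n) * ((g \<bullet> blinfun_apply (Pw A (Suc n)) z) / fact (Suc n))"
    by (simp add: diffs_def kc_def)
  also have "\<dots> = (g \<bullet> blinfun_apply (Pw A n) (blinfun_apply A z)) / fact n"
    by (simp add: Pw_Suc_apply del: of_nat_Suc)
  finally show "diffs (kc g A z) n = kc g A (blinfun_apply A z) n" by (simp add: kc_def)
qed

definition kk :: "'h::{real_inner,banach} \<Rightarrow> ('h \<Rightarrow>\<^sub>L 'h) \<Rightarrow> 'h \<Rightarrow> real \<Rightarrow> real" where
  "kk g A z t = g \<bullet> blinfun_apply (op_exp (t *\<^sub>R A)) z"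

lemma kk_deriv: "((kk g A z) has_real_derivative kk g A (blinfun_apply A z) t) (at t)"
  unfolding kk_def k_series
  using termdiffs_strong_converges_everywhere[of "kc g A z" t, OF kc_summable] by (simp only: kc_diffs)

lemma kk_zero: "kk g A z 0 = g \<bullet> z"
  unfolding kk_def k_series by (simp only: powser_zero) (simp add: kc_def Pw_def)

lemma kk_linear: "bounded_linear (\<lambda>z. kk g A z t)"
  unfolding kk_def
  by (rule bounded_linear_compose[OF bounded_linear_inner_right blinfun.bounded_linear_right])

lemma kk_bound: "\<bar>kk g A z t\<bar> \<le> norm g * norm z * exp (\<bar>t\<bar> * norm A)"
proof -
  let ?b = "\<lambda>n. norm g * norm z * ((\<bar>t\<bar> * norm A) ^ n / fact n)"
  have sb: "summable ?b"
    using summable_exp[of "\<bar>t\<bar> * norm A"] by (intro summable_mult) (simp add: field_simps)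
  have le: "\<bar>kc g A z n * t ^ n\<bar> \<le> ?b n" for n
  proof -
    have "\<bar>kc g A z n * t ^ n\<bar> = \<bar>kc g A z n\<bar> * \<bar>t\<bar> ^ n" by (simp add: abs_mult power_abs)
    also have "\<dots> \<le> norm g * norm z * norm A ^ n / fact n * \<bar>t\<bar> ^ n"
      by (intro mult_right_mono kc_bound) auto
    also have "\<dots> = ?b n" by (simp add: power_mult_distrib)
    finally show ?thesis .
  qed
  have sa: "summable (\<lambda>n. \<bar>kc g A z n * t ^ n\<bar>)"
    by (rule summable_comparison_test'[OF sb]) (use le in auto)
  have "\<bar>kk g A z t\<bar> = \<bar>\<Sum>n. kc g A z n * t ^ n\<bar>" by (simp add: kk_def k_series)
  also have "\<dots> \<le> (\<Sum>n. \<bar>kc g A z n * t ^ n\<bar>)" by (rule summable_rabs[OF sa])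
  also have "\<dots> \<le> suminf ?b" by (rule suminf_le[OF le sa sb])
  also have "\<dots> = norm g * norm z * (\<Sum>n. (\<bar>t\<bar> * norm A) ^ n / fact n)"
    by (rule suminf_mult) (use summable_exp[of "\<bar>t\<bar> * norm A"] in \<open>simp add: field_simps\<close>)
  also have "(\<Sum>n. (\<bar>t\<bar> * norm A) ^ n / fact n) = exp (\<bar>t\<bar> * norm A)"
    by (simp add: exp_def field_simps)
  finally show ?thesis .
qed

lemma kk_cont: "continuous_on S (kk g A z)"
  using kk_deriv by (meson DERIV_isCont continuous_at_imp_continuous_on)

lemma part_mono:
  fixes p :: "nat \<Rightarrow> real"
  assumes "\<forall>i<n. p i < p (Suc i)" "j \<le> k" "k \<le> n"
  shows "p j \<le> p k"
  using assms(2,3)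
proof (induction k)
  case 0 then show ?case by simp
next
  case (Suc k)
  show ?case
  proof (cases "j = Suc k")
    case False
    then have "p j \<le> p k" using Suc by simp
    also have "p k \<le> p (Suc k)" using assms(1) Suc.prems by (simp add: less_imp_le)
    finally show ?thesis .
  qed simp
qed

lemma part_in:
  fixes p :: "nat \<Rightarrow> real"
  assumes "p 0 = a" "p n = b" "\<forall>i<n. p i < p (Suc i)" "i \<le> n"
  shows "p i \<in> {a..b}"
  using part_mono[OF assms(3), of 0 i] part_mono[OF assms(3), of i n] assms by auto

lemma integral_partition:
  fixes p :: "nat \<Rightarrow> real" and h :: "real \<Rightarrow> real"
  assumes "p 0 = a" "p n = b" "\<forall>i<n. p i < p (Suc i)" "continuous_on {a..b} h"
  shows "integral {a..b} h = (\<Sum>i<n. integral {p i..p (Suc i)} h)"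
proof -
  have "m \<le> n \<Longrightarrow> integral {p 0..p m} h = (\<Sum>i<m. integral {p i..p (Suc i)} h)" for m
  proof (induction m)
    case 0 then show ?case by simp
  next
    case (Suc m)
    have sub: "{p 0..p (Suc m)} \<subseteq> {a..b}"
      using part_in[OF assms(1-3), of 0] part_in[OF assms(1-3), of "Suc m"] Suc.prems by auto
    have int: "h integrable_on {p 0..p (Suc m)}"
      by (rule integrable_continuous_interval) (rule continuous_on_subset[OF assms(4) sub])
    have "integral {p 0..p m} h + integral {p m..p (Suc m)} h = integral {p 0..p (Suc m)} h"
      by (rule Henstock_Kurzweil_Integration.integral_combine)
         (use part_mono[OF assms(3), of 0 m] part_mono[OF assms(3), of m "Suc m"] Suc.prems int in auto)
    then show ?case using Suc by simp
  qed
  then show ?thesis using assms by (metis order_refl)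
qed

lemma stoch_ibp:
  fixes f f' w :: "real \<Rightarrow> real"
  assumes ab: "a \<le> b" and wc: "continuous_on {a..b} w"
    and fd: "\<And>s. (f has_real_derivative f' s) (at s)" and f'c: "continuous_on {a..b} f'"
  shows "has_stoch_integral f w a b (w b * f b - w a * f a - integral {a..b} (\<lambda>s. w s * f' s))"
  unfolding has_stoch_integral_def
proof (intro allI impI)
  fix e :: real assume e: "e > 0"
  have "bounded (f' ` {a..b})"
    by (rule compact_imp_bounded, rule compact_continuous_image[OF f'c]) simp
  then obtain B where B: "B > 0" "\<And>s. s \<in> {a..b} \<Longrightarrow> \<bar>f' s\<bar> \<le> B"
    unfolding bounded_pos by auto
  define \<epsilon> where "\<epsilon> = e / (B * (b - a) + 1)"
  have "B * (b - a) \<ge> 0" using B ab by simp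
  then have den: "B * (b - a) + 1 > 0" by linarith
  have \<epsilon>: "\<epsilon> > 0" unfolding \<epsilon>_def using e den by simp
  have uc: "uniformly_continuous_on {a..b} w"
    by (rule compact_uniformly_continuous[OF wc]) simp
  then obtain d where d: "d > 0" "\<And>x x'. x \<in> {a..b} \<Longrightarrow> x' \<in> {a..b} \<Longrightarrow> dist x' x < d \<Longrightarrow> dist (w x') (w x) < \<epsilon>"
    unfolding uniformly_continuous_on_def using \<epsilon> by metis
  show "\<exists>d>0. \<forall>p n. p 0 = a \<and> p n = b \<and> (\<forall>i<n. p i < p (Suc i) \<and> p (Suc i) - p i < d) \<longrightarrow>
      norm ((\<Sum>i<n. (w (p (Suc i)) - w (p i)) *\<^sub>R f (p i)) - (w b * f b - w a * f a - integral {a..b} (\<lambda>s. w s * f' s))) < e"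
  proof (intro exI[of _ d] conjI allI impI d(1), elim conjE)
    fix p :: "nat \<Rightarrow> real" and n
    assume p0: "p 0 = a" and pn: "p n = b" and pp: "\<forall>i<n. p i < p (Suc i) \<and> p (Suc i) - p i < d"
    have pinc: "\<forall>i<n. p i < p (Suc i)" using pp by auto
    have pin: "i \<le> n \<Longrightarrow> p i \<in> {a..b}" for i using part_in[OF p0 pn pinc] by simp
    have subI: "i < n \<Longrightarrow> {p i..p (Suc i)} \<subseteq> {a..b}" for i
      using pin[of i] pin[of "Suc i"] by auto
    have tel: "(\<Sum>i<n. w (p (Suc i)) * f (p (Suc i)) - w (p i) * f (p i)) = w b * f b - w a * f a"
      using sum_lessThan_telescope[of "\<lambda>i. w (p i) * f (p i)" n] p0 pn by simp
    have S: "(\<Sum>i<n. (w (p (Suc i)) - w (p i)) *\<^sub>R f (p i)) =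
        (\<Sum>i<n. w (p (Suc i)) * f (p (Suc i)) - w (p i) * f (p i)) - (\<Sum>i<n. w (p (Suc i)) * (f (p (Suc i)) - f (p i)))"
      by (simp add: sum_subtractf[symmetric] algebra_simps)
    have ftc: "f (p (Suc i)) - f (p i) = integral {p i..p (Suc i)} f'" if "i < n" for i
    proof -
      have "(f' has_integral (f (p (Suc i)) - f (p i))) {p i..p (Suc i)}"
        by (rule fundamental_theorem_of_calculus)
           (use pinc that fd in \<open>auto simp: has_real_derivative_iff_has_vector_derivative[symmetric] intro: DERIV_subset\<close>)
      then show ?thesis by (simp add: integral_unique)
    qed
    have wf'c: "continuous_on {a..b} (\<lambda>s. w s * f' s)" by (intro continuous_intros wc f'c)
    have split: "integral {a..b} (\<lambda>s. w s * f' s) = (\<Sum>i<n. integral {p i..p (Suc i)} (\<lambda>s. w s * f' s))"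
      by (rule integral_partition[OF p0 pn pinc wf'c])
    have piece: "integral {p i..p (Suc i)} (\<lambda>s. w s * f' s) - w (p (Suc i)) * (f (p (Suc i)) - f (p i))
        = integral {p i..p (Suc i)} (\<lambda>s. (w s - w (p (Suc i))) * f' s)" if i: "i < n" for i
    proof -
      have c1: "continuous_on {p i..p (Suc i)} (\<lambda>s. w s * f' s)" by (rule continuous_on_subset[OF wf'c subI[OF i]])
      have c2: "continuous_on {p i..p (Suc i)} f'" by (rule continuous_on_subset[OF f'c subI[OF i]])
      have "integral {p i..p (Suc i)} (\<lambda>s. (w s - w (p (Suc i))) * f' s) =
          integral {p i..p (Suc i)} (\<lambda>s. w s * f' s - w (p (Suc i)) * f' s)"
        by (simp add: algebra_simps)
      also have "\<dots> = integral {p i..p (Suc i)} (\<lambda>s. w s * f' s) - integral {p i..p (Suc i)} (\<lambda>s. w (p (Suc i)) * f' s)"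
        by (rule integral_diff; rule integrable_continuous_interval)
           (use c1 c2 in \<open>auto intro: continuous_intros\<close>)
      also have "integral {p i..p (Suc i)} (\<lambda>s. w (p (Suc i)) * f' s) = w (p (Suc i)) * integral {p i..p (Suc i)} f'"
        by simp
      finally show ?thesis using ftc[OF i] by simp
    qed
    have bnd: "\<bar>integral {p i..p (Suc i)} (\<lambda>s. (w s - w (p (Suc i))) * f' s)\<bar> \<le> (\<epsilon> * B) * (p (Suc i) - p i)"
      if i: "i < n" for i
    proof -
      have "norm (integral {p i..p (Suc i)} (\<lambda>s. (w s - w (p (Suc i))) * f' s)) \<le> (\<epsilon> * B) * (p (Suc i) - p i)"
      proof (rule integral_bound)
        show "p i \<le> p (Suc i)" using pinc i by (simp add: less_imp_le)
        show "continuous_on {p i..p (Suc i)} (\<lambda>s. (w s - w (p (Suc i))) * f' s)"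
          by (rule continuous_on_subset[OF _ subI[OF i]]) (intro continuous_intros wc f'c)
        fix s assume s: "s \<in> {p i..p (Suc i)}"
        have sab: "s \<in> {a..b}" using s subI[OF i] by auto
        have "dist s (p (Suc i)) < d" using s pp i by (auto simp: dist_real_def)
        then have "\<bar>w s - w (p (Suc i))\<bar> < \<epsilon>" using d(2)[OF pin[of "Suc i"] sab] i by (simp add: dist_real_def)
        moreover have "\<bar>f' s\<bar> \<le> B" using B(2) sab by simp
        ultimately show "norm ((w s - w (p (Suc i))) * f' s) \<le> \<epsilon> * B"
          by (simp add: abs_mult mult_mono' less_imp_le)
      qed
      then show ?thesis by simp
    qed
    have "(\<Sum>i<n. (w (p (Suc i)) - w (p i)) *\<^sub>R f (p i)) - (w b * f b - w a * f a - integral {a..b} (\<lambda>s. w s * f' s))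
        = (\<Sum>i<n. integral {p i..p (Suc i)} (\<lambda>s. (w s - w (p (Suc i))) * f' s))"
      unfolding S tel split by (simp add: sum_subtractf[symmetric] piece)
    moreover have "\<bar>\<Sum>i<n. integral {p i..p (Suc i)} (\<lambda>s. (w s - w (p (Suc i))) * f' s)\<bar> \<le> (\<Sum>i<n. (\<epsilon> * B) * (p (Suc i) - p i))"
      by (rule order_trans[OF sum_abs]) (rule sum_mono, rule bnd, simp)
    moreover have "(\<Sum>i<n. (\<epsilon> * B) * (p (Suc i) - p i)) = (\<epsilon> * B) * (b - a)"
      using sum_lessThan_telescope[of p n] p0 pn by (simp add: sum_distrib_left[symmetric])
    moreover have "(\<epsilon> * B) * (b - a) < e"
    proof -
      have "(\<epsilon> * B) * (b - a) = e * (B * (b - a)) / (B * (b - a) + 1)" unfolding \<epsilon>_def by simp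
      also have "\<dots> < e" using den e by (simp add: divide_less_eq)
      finally show ?thesis .
    qed
    ultimately show "norm ((\<Sum>i<n. (w (p (Suc i)) - w (p i)) *\<^sub>R f (p i)) - (w b * f b - w a * f a - integral {a..b} (\<lambda>s. w s * f' s))) < e"
      by simp
  qed
qed

lemma blinfun_meas[measurable]:
  fixes P :: "'h::{banach,second_countable_topology} \<Rightarrow>\<^sub>L 'h"
  assumes [measurable]: "G \<in> borel_measurable M"
  shows "(\<lambda>x. blinfun_apply P (G x)) \<in> borel_measurable M"
proof -
  have "blinfun_apply P \<in> borel_measurable borel"
    by (rule borel_measurable_continuous_onI) (rule linear_continuous_on[OF blinfun.bounded_linear_right])
  then show ?thesis using assms by (rule measurable_compose[rotated])
qed

lemma kk_measurable[measurable]: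
  fixes A :: "'h::{real_inner,banach,second_countable_topology} \<Rightarrow>\<^sub>L 'h"
  assumes [measurable]: "G \<in> borel_measurable M" "a \<in> borel_measurable M"
  shows "(\<lambda>x. kk g A (G x) (a x)) \<in> borel_measurable M"
proof (rule borel_measurable_LIMSEQ_real)
  fix x
  show "(\<lambda>i. \<Sum>n<i. kc g A (G x) n * (a x) ^ n) \<longlonglongrightarrow> kk g A (G x) (a x)"
    unfolding kk_def k_series by (rule summable_LIMSEQ[OF kc_summable])
next
  fix i
  show "(\<lambda>x. \<Sum>n<i. kc g A (G x) n * (a x) ^ n) \<in> borel_measurable M"
    unfolding kc_def by measurable
qed

lemma set_integral_blin:
  fixes f :: "'a \<Rightarrow> 'b::{banach,second_countable_topology}"
    and T :: "'b \<Rightarrow> 'c::{banach,second_countable_topology}"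
  assumes T: "bounded_linear T" and f: "set_integrable M S f"
  shows "set_integrable M S (\<lambda>x. T (f x))" "T (LINT x:S|M. f x) = (LINT x:S|M. T (f x))"
proof -
  interpret T: bounded_linear T by fact
  have eq: "(\<lambda>x. T (indicator S x *\<^sub>R f x)) = (\<lambda>x. indicator S x *\<^sub>R T (f x))"
    by (simp add: T.scaleR)
  have i: "integrable M (\<lambda>x. indicator S x *\<^sub>R f x)" using f by (simp add: set_integrable_def)
  show "set_integrable M S (\<lambda>x. T (f x))"
    unfolding set_integrable_def eq[symmetric] by (rule integrable_bounded_linear[OF T i])
  show "T (LINT x:S|M. f x) = (LINT x:S|M. T (f x))"
    unfolding set_lebesgue_integral_def eq[symmetric] by (rule integral_bounded_linear[OF T i, symmetric])
qed

lemma part_exists: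
  fixes a b d :: real
  assumes "a \<le> b" "d > 0"
  shows "\<exists>p n. p 0 = a \<and> p n = b \<and> (\<forall>i<n. p i < p (Suc i) \<and> p (Suc i) - p i < d)"
proof (cases "a = b")
  case True
  then show ?thesis by (intro exI[of _ "\<lambda>_. a"] exI[of _ 0]) auto
next
  case False
  then have ab: "a < b" using assms by simp
  obtain N :: nat where N: "(b - a) / d < N" using reals_Archimedean2 by blast
  have Npos: "N > 0" using N ab assms by (metis divide_pos_pos diff_gt_0_iff_gt gr0I of_nat_0 order.asym)
  have step: "(b - a) / N < d" using N Npos assms by (simp add: divide_less_eq mult.commute)
  have pos: "(b - a) / N > 0" using ab Npos by simp
  have d: "(a + real (Suc i) * ((b - a) / N)) - (a + real i * ((b - a) / N)) = (b - a) / N" for i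
    by (simp add: algebra_simps add_divide_distrib[symmetric])
  define p where "p = (\<lambda>i. a + real i * ((b - a) / N))"
  have "\<forall>i<N. p i < p (Suc i) \<and> p (Suc i) - p i < d"
  proof (intro allI impI)
    fix i
    show "p i < p (Suc i) \<and> p (Suc i) - p i < d"
      using d[of i] pos step unfolding p_def by linarith
  qed
  moreover have "p 0 = a" "p N = b" using Npos by (auto simp: p_def)
  ultimately show ?thesis by blast
qed

lemma stoch_unique:
  fixes f :: "real \<Rightarrow> 'b::real_normed_vector"
  assumes "has_stoch_integral f w a b I" "has_stoch_integral f w a b J" "a \<le> b"
  shows "I = J"
proof (rule ccontr)
  assume ne: "I \<noteq> J"
  define e where "e = norm (I - J) / 2"
  have e: "e > 0" using ne by (simp add: e_def)
  obtain d1 where d1: "d1 > 0" "\<forall>(p::nat \<Rightarrow> real) n. p 0 = a \<and> p n = b \<and> (\<forall>i<n. p i < p (Suc i) \<and> p (Suc i) - p i < d1) \<longrightarrow>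
        norm ((\<Sum>i<n. (w (p (Suc i)) - w (p i)) *\<^sub>R f (p i)) - I) < e"
    using assms(1) e unfolding has_stoch_integral_def by blast
  obtain d2 where d2: "d2 > 0" "\<forall>(p::nat \<Rightarrow> real) n. p 0 = a \<and> p n = b \<and> (\<forall>i<n. p i < p (Suc i) \<and> p (Suc i) - p i < d2) \<longrightarrow>
        norm ((\<Sum>i<n. (w (p (Suc i)) - w (p i)) *\<^sub>R f (p i)) - J) < e"
    using assms(2) e unfolding has_stoch_integral_def by blast
  obtain p n where p: "p 0 = a" "p n = b" "\<forall>i<n. p i < p (Suc i) \<and> p (Suc i) - p i < min d1 d2"
    using part_exists[OF assms(3), of "min d1 d2"] d1 d2 by auto
  define S where "S = (\<Sum>i<n. (w (p (Suc i)) - w (p i)) *\<^sub>R f (p i))"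
  have "norm (S - I) < e" using d1(2) p unfolding S_def by auto
  moreover have "norm (S - J) < e" using d2(2) p unfolding S_def by auto
  ultimately have "norm (I - J) < 2 * e" using norm_triangle_ineq4[of "S - J" "S - I"]
    by (simp add: norm_minus_commute)
  then show False by (simp add: e_def)
qed

lemma stoch_const:
  fixes c :: "'b::real_normed_vector"
  shows "has_stoch_integral (\<lambda>s. c) w a b ((w b - w a) *\<^sub>R c)"
  unfolding has_stoch_integral_def
proof (intro allI impI)
  fix e :: real assume "e > 0"
  then show "\<exists>d>0. \<forall>p n. p 0 = a \<and> p n = b \<and> (\<forall>i<n. p i < p (Suc i) \<and> p (Suc i) - p i < d) \<longrightarrow>
        norm ((\<Sum>i<n. (w (p (Suc i)) - w (p i)) *\<^sub>R c) - (w b - w a) *\<^sub>R c) < e"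
    by (intro exI[of _ 1]) (auto simp: scaleR_sum_left[symmetric] sum_lessThan_telescope[of "\<lambda>i. w (p i)" for p])
qed

lemma kk_zero_vec: "kk g A 0 t = 0"
  using linear_0[OF bounded_linear.linear[OF kk_linear]] .

lemma kk_bound2:
  assumes "\<bar>\<tau>\<bar> \<le> t"
  shows "\<bar>kk g A (blinfun_apply P z) \<tau>\<bar> \<le> (norm g * norm P * exp (t * norm A)) * norm z"
proof -
  have "\<bar>kk g A (blinfun_apply P z) \<tau>\<bar> \<le> norm g * norm (blinfun_apply P z) * exp (\<bar>\<tau>\<bar> * norm A)"
    by (rule kk_bound)
  also have "\<dots> \<le> norm g * (norm P * norm z) * exp (t * norm A)"
    by (intro mult_mono mult_left_mono norm_blinfun) (use assms in \<open>auto intro: mult_right_mono\<close>)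
  finally show ?thesis by (simp add: mult_ac)
qed

lemma kk_setint:
  fixes A P :: "'h::{real_inner,banach,second_countable_topology} \<Rightarrow>\<^sub>L 'h"
  assumes t: "0 \<le> t" and G: "set_integrable lborel {0..t} G"
  shows "set_integrable lborel {0..t} (\<lambda>s. kk g A (blinfun_apply P (G s)) (t - s))"
proof (rule set_integrable_bound)
  define c where "c = norm g * norm P * exp (t * norm A)"
  show "set_integrable lborel {0..t} (\<lambda>s. c *\<^sub>R G s)" using G by simp
  have Gm: "(\<lambda>s. indicator {0..t} s *\<^sub>R G s) \<in> borel_measurable lborel"
    using G unfolding set_integrable_def by (rule borel_measurable_integrable)
  have "(\<lambda>s. indicator {0..t} s *\<^sub>R kk g A (blinfun_apply P (G s)) (t - s)) =
        (\<lambda>s. kk g A (blinfun_apply P (indicator {0..t} s *\<^sub>R G s)) (t - s))"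
    by (rule ext) (simp add: indicator_def kk_zero_vec)
  also have "\<dots> \<in> borel_measurable lborel" using Gm by measurable
  finally show "set_borel_measurable lborel {0..t} (\<lambda>s. kk g A (blinfun_apply P (G s)) (t - s))"
    unfolding set_borel_measurable_def .
  show "AE s in lborel. s \<in> {0..t} \<longrightarrow> norm (kk g A (blinfun_apply P (G s)) (t - s)) \<le> norm (c *\<^sub>R G s)"
  proof (intro AE_I2 impI)
    fix s assume s: "s \<in> {0..t}"
    have "\<bar>kk g A (blinfun_apply P (G s)) (t - s)\<bar> \<le> c * norm (G s)"
      unfolding c_def by (rule kk_bound2) (use s in auto)
    moreover have "c \<ge> 0" unfolding c_def by simp
    ultimately show "norm (kk g A (blinfun_apply P (G s)) (t - s)) \<le> norm (c *\<^sub>R G s)" by simp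
  qed
qed

lemma kk_add: "kk g A (x + y) t = kk g A x t + kk g A y t"
  by (simp add: kk_def blinfun.add_right inner_add_right)

lemma kk_scale: "kk g A (c *\<^sub>R x) t = c * kk g A x t"
  by (simp add: kk_def blinfun.scaleR_right)

lemma kk_inner_FTC:
  fixes A :: "'h::{real_inner,banach} \<Rightarrow>\<^sub>L 'h"
  assumes "r \<le> t"
  shows "integral {r..t} (\<lambda>s. kk g A (blinfun_apply A z) (t - s)) = kk g A z (t - r) - g \<bullet> z"
proof -
  have "((\<lambda>s. kk g A (blinfun_apply A z) (t - s)) has_integral
        ((\<lambda>s. - kk g A z (t - s)) t - (\<lambda>s. - kk g A z (t - s)) r)) {r..t}"
  proof (rule fundamental_theorem_of_calculus[OF assms])
    fix x assume "x \<in> {r..t}"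
    have "((\<lambda>s. - kk g A z (t - s)) has_real_derivative kk g A (blinfun_apply A z) (t - x)) (at x)"
    proof -
      have d: "((\<lambda>s. t - s) has_real_derivative -1) (at x)"
        by (auto intro!: derivative_eq_intros)
      have "((\<lambda>s. kk g A z (t - s)) has_real_derivative kk g A (blinfun_apply A z) (t - x) * -1) (at x)"
        by (rule DERIV_chain2[of "kk g A z" _ "\<lambda>s. t - s" x, OF kk_deriv d])
      then show ?thesis using DERIV_minus by fastforce
    qed
    then show "((\<lambda>s. - kk g A z (t - s)) has_vector_derivative kk g A (blinfun_apply A z) (t - x)) (at x within {r..t})"
      by (simp add: has_real_derivative_iff_has_vector_derivative[symmetric] has_field_derivative_at_within)
  qed
  then show ?thesis by (simp add: integral_unique kk_zero)
qed

lemma core: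
  fixes A :: "'h::{real_inner,banach,second_countable_topology} \<Rightarrow>\<^sub>L 'h" and g \<nu> :: 'h
    and F Z :: "real \<Rightarrow> 'h" and W \<phi> :: "real \<Rightarrow> real" and \<sigma> t :: real
  assumes t: "0 \<le> t"
    and Fint: "set_integrable lborel {0..t} F"
    and Zint: "set_integrable lborel {0..t} Z"
    and Zeq: "\<And>s. s \<in> {0..t} \<Longrightarrow> Z s = (LINT r:{0..s}|lborel. F r) + (\<sigma> * W s) *\<^sub>R \<nu>"
    and Fdef: "\<And>r. r \<in> {0..t} \<Longrightarrow> F r = blinfun_apply A (Z r) + \<phi> r *\<^sub>R \<nu>"
    and Wc: "continuous_on {0..t} W"
  shows "set_integrable lborel {0..t} (\<lambda>s. kk g A \<nu> (t - s) * \<phi> s)"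
    "g \<bullet> Z t = (LINT s:{0..t}|lborel. kk g A \<nu> (t - s) * \<phi> s)
        + \<sigma> * ((g \<bullet> \<nu>) * W t + integral {0..t} (\<lambda>s. W s * kk g A (blinfun_apply A \<nu>) (t - s)))"
proof -
  let ?k = "kk g A"
  let ?A = "blinfun_apply A"
  define F' where "F' = (\<lambda>r. indicator {0..t} r *\<^sub>R F r)"
  have F'm[measurable]: "F' \<in> borel_measurable lborel"
    using Fint unfolding set_integrable_def F'_def by (rule borel_measurable_integrable)
  have F'i: "integrable lborel F'" using Fint unfolding set_integrable_def F'_def .
  have IQ: "set_integrable lborel {0..t} (\<lambda>s. ?k (?A (Z s)) (t - s))"
    by (rule kk_setint[OF t Zint])
  have IF: "set_integrable lborel {0..t} (\<lambda>s. ?k (F s) (t - s))"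
    using kk_setint[OF t Fint, of g A id_blinfun] by simp
  have contW: "continuous_on {0..t} (\<lambda>s. W s * ?k (?A \<nu>) (t - s))"
    by (intro continuous_intros Wc continuous_on_compose2[OF kk_cont[of UNIV]]) auto
  have IW: "set_integrable lborel {0..t} (\<lambda>s. W s * ?k (?A \<nu>) (t - s))"
    by (rule borel_integrable_atLeastAtMost'[OF contW])
  have step2: "?k (?A (Z s)) (t - s) = (LINT r:{0..s}|lborel. ?k (?A (F r)) (t - s)) + \<sigma> * (W s * ?k (?A \<nu>) (t - s))"
    if s: "s \<in> {0..t}" for s
  proof -
    have Fs: "set_integrable lborel {0..s} F"
      by (rule set_integrable_subset[OF Fint]) (use s in auto)
    have bl: "bounded_linear (\<lambda>z. ?k (?A z) (t - s))"
      by (rule bounded_linear_compose[OF kk_linear blinfun.bounded_linear_right])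
    have "?k (?A (Z s)) (t - s) = ?k (?A (LINT r:{0..s}|lborel. F r)) (t - s) + ?k (?A ((\<sigma> * W s) *\<^sub>R \<nu>)) (t - s)"
      using Zeq[OF s] by (simp add: blinfun.add_right kk_add)
    also have "?k (?A (LINT r:{0..s}|lborel. F r)) (t - s) = (LINT r:{0..s}|lborel. ?k (?A (F r)) (t - s))"
      by (rule set_integral_blin(2)[OF bl Fs])
    also have "?k (?A ((\<sigma> * W s) *\<^sub>R \<nu>)) (t - s) = \<sigma> * (W s * ?k (?A \<nu>) (t - s))"
      by (simp add: blinfun.scaleR_right kk_scale)
    finally show ?thesis .
  qed
  define h where "h = (\<lambda>(s::real, r::real). if 0 \<le> s \<and> s \<le> t \<and> 0 \<le> r \<and> r \<le> s then ?k (?A (F' r)) (t - s) else 0)"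
  have hm[measurable]: "h \<in> borel_measurable (lborel \<Otimes>\<^sub>M lborel)"
    unfolding h_def by measurable
  define c where "c = norm g * norm A * exp (t * norm A)"
  have c0: "c \<ge> 0" unfolding c_def by simp
  define hb where "hb = (\<lambda>(s::real, r::real). indicator {0..t} s * (c * norm (F' r)))"
  have hbm[measurable]: "hb \<in> borel_measurable (lborel \<Otimes>\<^sub>M lborel)"
    unfolding hb_def by measurable
  have hbi: "integrable (lborel \<Otimes>\<^sub>M lborel) hb"
  proof (rule lborel_pair.Fubini_integrable[OF hbm])
    have eq: "(\<lambda>s. \<integral>r. norm (hb (s, r)) \<partial>lborel) = (\<lambda>s. indicator {0..t} s *\<^sub>R (c * (\<integral>r. norm (F' r) \<partial>lborel)))"
      by (rule ext) (simp add: hb_def c0 abs_mult)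
    show "integrable lborel (\<lambda>s. \<integral>r. norm (hb (s, r)) \<partial>lborel)"
      unfolding eq using borel_integrable_atLeastAtMost'[of 0 t "\<lambda>_. c * (\<integral>r. norm (F' r) \<partial>lborel)"]
      by (simp add: set_integrable_def)
    show "AE s in lborel. integrable lborel (\<lambda>r. hb (s, r))"
      using F'i by (simp add: hb_def)
  qed
  have hi: "integrable (lborel \<Otimes>\<^sub>M lborel) h"
  proof (rule Bochner_Integration.integrable_bound[OF hbi hm], intro AE_I2)
    fix p :: "real \<times> real"
    obtain s r where p: "p = (s, r)" by fastforce
    show "norm (h p) \<le> norm (hb p)"
    proof (cases "0 \<le> s \<and> s \<le> t \<and> 0 \<le> r \<and> r \<le> s")
      case True
      have "\<bar>?k (?A (F' r)) (t - s)\<bar> \<le> c * norm (F' r)"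
        unfolding c_def by (rule kk_bound2) (use True in auto)
      then show ?thesis using True c0 by (simp add: p h_def hb_def)
    next
      case False
      then show ?thesis by (auto simp: p h_def hb_def c0)
    qed
  qed
  have fub: "(\<integral>r. (\<integral>s. h (s, r) \<partial>lborel) \<partial>lborel) = (\<integral>s. (\<integral>r. h (s, r) \<partial>lborel) \<partial>lborel)"
    using lborel_pair.Fubini_integral[of "\<lambda>s r. h (s, r)"] hi by simp
  have inner_r: "(\<integral>r. h (s, r) \<partial>lborel) = indicator {0..t} s * (?k (?A (Z s)) (t - s) - \<sigma> * (W s * ?k (?A \<nu>) (t - s)))" for s
  proof (cases "s \<in> {0..t}")
    case True
    have "(\<integral>r. h (s, r) \<partial>lborel) = (LINT r:{0..s}|lborel. ?k (?A (F r)) (t - s))"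
      unfolding set_lebesgue_integral_def
      by (rule Bochner_Integration.integral_cong) (use True in \<open>auto simp: h_def F'_def indicator_def\<close>)
    then show ?thesis using step2[OF True] True by simp
  next
    case False
    then show ?thesis by (auto simp: h_def)
  qed
  have RHS: "(\<integral>s. (\<integral>r. h (s, r) \<partial>lborel) \<partial>lborel) =
      (LINT s:{0..t}|lborel. ?k (?A (Z s)) (t - s)) - \<sigma> * (LINT s:{0..t}|lborel. W s * ?k (?A \<nu>) (t - s))"
  proof -
    have "(\<integral>s. (\<integral>r. h (s, r) \<partial>lborel) \<partial>lborel) =
        (LINT s:{0..t}|lborel. ?k (?A (Z s)) (t - s) - \<sigma> * (W s * ?k (?A \<nu>) (t - s)))"
      unfolding inner_r set_lebesgue_integral_def by simp
    also have "\<dots> = (LINT s:{0..t}|lborel. ?k (?A (Z s)) (t - s)) - (LINT s:{0..t}|lborel. \<sigma> * (W s * ?k (?A \<nu>) (t - s)))"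
      by (rule set_integral_diff(2)[OF IQ]) (use IW in simp)
    finally show ?thesis by simp
  qed
  have inner_s: "(\<integral>s. h (s, r) \<partial>lborel) = indicator {0..t} r * (?k (F r) (t - r) - g \<bullet> F r)" for r
  proof (cases "r \<in> {0..t}")
    case True
    have cont: "continuous_on {r..t} (\<lambda>s. ?k (?A (F r)) (t - s))"
      by (intro continuous_on_compose2[OF kk_cont[of UNIV]] continuous_intros) auto
    have "(\<integral>s. h (s, r) \<partial>lborel) = (LINT s:{r..t}|lborel. ?k (?A (F r)) (t - s))"
      unfolding set_lebesgue_integral_def
      by (rule Bochner_Integration.integral_cong) (use True in \<open>auto simp: h_def F'_def indicator_def\<close>)
    also have "\<dots> = integral {r..t} (\<lambda>s. ?k (?A (F r)) (t - s))"
      by (rule set_borel_integral_eq_integral(2)[OF borel_integrable_atLeastAtMost'[OF cont]])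
    also have "\<dots> = ?k (F r) (t - r) - g \<bullet> F r"
      by (rule kk_inner_FTC) (use True in auto)
    finally show ?thesis using True by simp
  next
    case False
    then have "(\<lambda>s. h (s, r)) = (\<lambda>s. 0)" by (auto simp: h_def)
    then show ?thesis using False by simp
  qed
  have gF: "g \<bullet> (LINT r:{0..t}|lborel. F r) = (LINT r:{0..t}|lborel. g \<bullet> F r)"
    by (rule set_integral_blin(2)[OF bounded_linear_inner_right Fint])
  have IgF: "set_integrable lborel {0..t} (\<lambda>r. g \<bullet> F r)"
    by (rule set_integral_blin(1)[OF bounded_linear_inner_right Fint])
  have LHS: "(\<integral>r. (\<integral>s. h (s, r) \<partial>lborel) \<partial>lborel) =
      (LINT r:{0..t}|lborel. ?k (F r) (t - r)) - g \<bullet> (LINT r:{0..t}|lborel. F r)"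
  proof -
    have "(\<integral>r. (\<integral>s. h (s, r) \<partial>lborel) \<partial>lborel) = (LINT r:{0..t}|lborel. ?k (F r) (t - r) - g \<bullet> F r)"
      unfolding inner_s set_lebesgue_integral_def by simp
    also have "\<dots> = (LINT r:{0..t}|lborel. ?k (F r) (t - r)) - (LINT r:{0..t}|lborel. g \<bullet> F r)"
      by (rule set_integral_diff(2)[OF IF IgF])
    finally show ?thesis using gF by simp
  qed
  have kF: "?k (F r) (t - r) = ?k (?A (Z r)) (t - r) + ?k \<nu> (t - r) * \<phi> r" if "r \<in> {0..t}" for r
    using Fdef[OF that] by (simp add: kk_add kk_scale)
  have Iphi0: "set_integrable lborel {0..t} (\<lambda>r. ?k (F r) (t - r) - ?k (?A (Z r)) (t - r))"
    by (rule set_integral_diff(1)[OF IF IQ])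
  show Iphi: "set_integrable lborel {0..t} (\<lambda>s. ?k \<nu> (t - s) * \<phi> s)"
    using Iphi0 by (rule set_integrable_cong[THEN iffD1, rotated -1]) (auto simp: kF)
  have "(LINT r:{0..t}|lborel. ?k (F r) (t - r)) = (LINT r:{0..t}|lborel. ?k (?A (Z r)) (t - r) + ?k \<nu> (t - r) * \<phi> r)"
    by (rule set_lebesgue_integral_cong) (auto simp: kF)
  also have "\<dots> = (LINT r:{0..t}|lborel. ?k (?A (Z r)) (t - r)) + (LINT r:{0..t}|lborel. ?k \<nu> (t - r) * \<phi> r)"
    by (rule set_integral_add(2)[OF IQ Iphi])
  finally have kFint: "(LINT r:{0..t}|lborel. ?k (F r) (t - r)) = (LINT r:{0..t}|lborel. ?k (?A (Z r)) (t - r)) + (LINT r:{0..t}|lborel. ?k \<nu> (t - r) * \<phi> r)" .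
  have key: "g \<bullet> (LINT r:{0..t}|lborel. F r) = (LINT r:{0..t}|lborel. ?k \<nu> (t - r) * \<phi> r) + \<sigma> * (LINT s:{0..t}|lborel. W s * ?k (?A \<nu>) (t - s))"
    using fub LHS RHS kFint by simp
  have Wint: "(LINT s:{0..t}|lborel. W s * ?k (?A \<nu>) (t - s)) = integral {0..t} (\<lambda>s. W s * ?k (?A \<nu>) (t - s))"
    by (rule set_borel_integral_eq_integral(2)[OF IW])
  have "g \<bullet> Z t = g \<bullet> (LINT r:{0..t}|lborel. F r) + \<sigma> * W t * (g \<bullet> \<nu>)"
    using Zeq[of t] t by (simp add: inner_add_right)
  then show "g \<bullet> Z t = (LINT s:{0..t}|lborel. ?k \<nu> (t - s) * \<phi> s)
        + \<sigma> * ((g \<bullet> \<nu>) * W t + integral {0..t} (\<lambda>s. W s * ?k (?A \<nu>) (t - s)))"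
    using key Wint by (simp add: algebra_simps)
qed

lemma gronwall0:
  fixes D :: "real \<Rightarrow> real"
  assumes Dint: "set_integrable lborel {0..T} D" and L: "L \<ge> 0"
    and bnd: "\<And>t. t \<in> {0..T} \<Longrightarrow> \<bar>D t\<bar> \<le> L * (LINT s:{0..t}|lborel. \<bar>D s\<bar>)"
    and t: "t \<in> {0..T}"
  shows "D t = 0"
proof -
  define M0 where "M0 = (LINT s:{0..T}|lborel. \<bar>D s\<bar>)"
  have absI: "set_integrable lborel {0..T} (\<lambda>s. \<bar>D s\<bar>)" by (rule set_integrable_abs[OF Dint])
  have absIt: "set_integrable lborel {0..t} (\<lambda>s. \<bar>D s\<bar>)" if "t \<in> {0..T}" for t
    by (rule set_integrable_subset[OF absI]) (use that in auto)
  have claim: "\<forall>t\<in>{0..T}. \<bar>D t\<bar> \<le> L * M0 * ((L * t) ^ n / fact n)" for n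
  proof (induction n)
    case 0
    show ?case
    proof
      fix t assume t: "t \<in> {0..T}"
      have "(LINT s:{0..t}|lborel. \<bar>D s\<bar>) \<le> M0"
        unfolding M0_def set_lebesgue_integral_def
        by (rule integral_mono) (use absIt[OF t] absI t in \<open>auto simp: set_integrable_def indicator_def\<close>)
      then have "L * (LINT s:{0..t}|lborel. \<bar>D s\<bar>) \<le> L * M0" using L by (rule mult_left_mono)
      then show "\<bar>D t\<bar> \<le> L * M0 * ((L * t) ^ 0 / fact 0)" using bnd[OF t] by simp
    qed
  next
    case (Suc n)
    show ?case
    proof
      fix t assume t: "t \<in> {0..T}"
      have contp: "continuous_on {0..t} (\<lambda>s. L * M0 * ((L * s) ^ n / fact n))"
        by (intro continuous_intros) auto
      have Ip: "set_integrable lborel {0..t} (\<lambda>s. L * M0 * ((L * s) ^ n / fact n))"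
        by (rule borel_integrable_atLeastAtMost'[OF contp])
      have "(LINT s:{0..t}|lborel. \<bar>D s\<bar>) \<le> (LINT s:{0..t}|lborel. L * M0 * ((L * s) ^ n / fact n))"
        by (rule set_integral_mono[OF absIt[OF t] Ip]) (use Suc t in auto)
      also have "\<dots> = L * M0 * (L ^ n / fact n) * (LINT s:{0..t}|lborel. s ^ n)"
        by (simp add: power_mult_distrib field_simps)
      also have "(LINT s:{0..t}|lborel. s ^ n) = t ^ Suc n / Suc n"
        using integral_power[of 0 t n] t by (simp add: set_lebesgue_integral_def mult.commute)
      finally have "L * (LINT s:{0..t}|lborel. \<bar>D s\<bar>) \<le> L * (L * M0 * (L ^ n / fact n) * (t ^ Suc n / Suc n))"
        by (rule mult_left_mono[OF _ L])
      also have "\<dots> = L * M0 * ((L * t) ^ Suc n / fact (Suc n))"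
        by (simp add: power_mult_distrib field_simps)
      finally show "\<bar>D t\<bar> \<le> L * M0 * ((L * t) ^ Suc n / fact (Suc n))" using bnd[OF t] by linarith
    qed
  qed
  have "(\<lambda>n. inverse (fact n) * (L * t) ^ n) \<longlonglongrightarrow> 0"
    by (rule summable_LIMSEQ_zero[OF summable_exp])
  then have "(\<lambda>n. L * M0 * ((L * t) ^ n / fact n)) \<longlonglongrightarrow> L * M0 * 0"
    by (intro tendsto_mult_left) (simp add: field_simps)
  then have "\<bar>D t\<bar> \<le> L * M0 * 0"
    by (rule LIMSEQ_le_const) (use claim t in auto)
  then show ?thesis by simp
qed

lemma set_int_abs_bound:
  fixes f :: "real \<Rightarrow> real"
  shows "\<bar>LINT s:S|lborel. f s\<bar> \<le> (LINT s:S|lborel. \<bar>f s\<bar>)"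
proof -
  have "\<bar>LINT s:S|lborel. f s\<bar> = norm (\<integral>s. indicator S s *\<^sub>R f s \<partial>lborel)"
    by (simp add: set_lebesgue_integral_def)
  also have "\<dots> \<le> (\<integral>s. norm (indicator S s *\<^sub>R f s) \<partial>lborel)" by (rule integral_norm_bound)
  also have "\<dots> = (LINT s:S|lborel. \<bar>f s\<bar>)"
    by (simp add: set_lebesgue_integral_def abs_mult)
  finally show ?thesis .
qed

lemma pathwise:
  fixes T \<alpha> \<beta> \<sigma> X0 :: real
    and g \<nu> \<zeta>0 :: "'h::{real_inner, banach, second_countable_topology}"
    and A :: "'h \<Rightarrow>\<^sub>L 'h" and K :: "real \<Rightarrow> real"
    and u X W :: "real \<Rightarrow> real" and Z :: "real \<Rightarrow> 'h"
  assumes T_pos: "T > 0" and \<beta>_pos: "\<beta> > 0"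
    and g_nz: "g \<noteq> 0" and \<nu>_norm: "norm \<nu> = 1"
    and K_def: "\<forall>t. K t = g \<bullet> blinfun_apply (op_exp (t *\<^sub>R A)) \<nu>"
    and W0: "W 0 = 0" and Wc: "continuous_on {0..} W"
    and X_sol: "set_integrable lborel {0..T} X \<and>
       (\<forall>t\<in>{0..T}.
          set_integrable lborel {0..t} (\<lambda>s. K (t - s) * (\<alpha> * u s - \<beta> * X s)) \<and>
          (\<exists>I. has_stoch_integral (\<lambda>s. K (t - s)) W 0 t I \<and>
               X t = X0 + (LINT s:{0..t}|lborel. K (t - s) * (\<alpha> * u s - \<beta> * X s))
                       + \<sigma> * I))"
    and \<zeta>0_def: "\<zeta>0 = (X0 / (norm g)\<^sup>2) *\<^sub>R g"
    and Z_sol: "set_integrable lborel {0..T} Z \<and>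
       (\<forall>t\<in>{0..T}.
          set_integrable lborel {0..t}
            (\<lambda>s. (blinfun_apply A (Z s) - (\<beta> * (g \<bullet> Z s)) *\<^sub>R \<nu>)
                 - (\<beta> * (g \<bullet> \<zeta>0)) *\<^sub>R \<nu> + (\<alpha> * u s) *\<^sub>R \<nu>) \<and>
          (\<exists>I. has_stoch_integral (\<lambda>s. \<sigma> *\<^sub>R \<nu>) W 0 t I \<and>
               Z t = (LINT s:{0..t}|lborel.
                          (blinfun_apply A (Z s) - (\<beta> * (g \<bullet> Z s)) *\<^sub>R \<nu>)
                          - (\<beta> * (g \<bullet> \<zeta>0)) *\<^sub>R \<nu> + (\<alpha> * u s) *\<^sub>R \<nu>) + I))"
  shows "\<forall>t\<in>{0..T}. X t = g \<bullet> \<zeta>0 + g \<bullet> Z t"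
proof -
  have Kk: "K = kk g A \<nu>" by (rule ext) (simp add: K_def kk_def)
  define c0 where "c0 = g \<bullet> \<zeta>0"
  have c0X: "c0 = X0"
  proof -
    have "g \<bullet> g = (norm g)\<^sup>2" by (simp add: power2_norm_eq_inner)
    moreover have "(norm g)\<^sup>2 \<noteq> 0" using g_nz by simp
    ultimately show ?thesis unfolding c0_def \<zeta>0_def by (simp add: inner_scaleR_right)
  qed
  define F where "F = (\<lambda>s. (blinfun_apply A (Z s) - (\<beta> * (g \<bullet> Z s)) *\<^sub>R \<nu>)
                 - (\<beta> * c0) *\<^sub>R \<nu> + (\<alpha> * u s) *\<^sub>R \<nu>)"
  define \<phi> where "\<phi> = (\<lambda>s. \<alpha> * u s - \<beta> * (c0 + g \<bullet> Z s))"
  define Y where "Y = (\<lambda>s. c0 + g \<bullet> Z s)"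
  define D where "D = (\<lambda>s. X s - Y s)"
  have Fdef: "F r = blinfun_apply A (Z r) + \<phi> r *\<^sub>R \<nu>" for r
    by (simp add: F_def \<phi>_def algebra_simps)
  have Zint: "set_integrable lborel {0..T} Z" using Z_sol by blast
  have Xint: "set_integrable lborel {0..T} X" using X_sol by blast
  have Zeq: "set_integrable lborel {0..s} F \<and> Z s = (LINT r:{0..s}|lborel. F r) + (\<sigma> * W s) *\<^sub>R \<nu>"
    if s: "s \<in> {0..T}" for s
  proof -
    obtain J where J: "has_stoch_integral (\<lambda>s. \<sigma> *\<^sub>R \<nu>) W 0 s J"
      and Zs: "Z s = (LINT r:{0..s}|lborel. F r) + J" and Fi: "set_integrable lborel {0..s} F"
      using Z_sol s unfolding F_def c0_def by blast
    have "J = (W s - W 0) *\<^sub>R (\<sigma> *\<^sub>R \<nu>)"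
      by (rule stoch_unique[OF J stoch_const]) (use s in auto)
    then show ?thesis using Zs Fi W0 by simp
  qed
  have Deq: "set_integrable lborel {0..t} (\<lambda>s. kk g A \<nu> (t - s) * D s) \<and>
      D t = - \<beta> * (LINT s:{0..t}|lborel. kk g A \<nu> (t - s) * D s)" if t: "t \<in> {0..T}" for t
  proof -
    have t0: "0 \<le> t" using t by simp
    have FintT: "set_integrable lborel {0..t} F" using Zeq[OF t] by blast
    have Zintt: "set_integrable lborel {0..t} Z" by (rule set_integrable_subset[OF Zint]) (use t in auto)
    have Wct: "continuous_on {0..t} W" by (rule continuous_on_subset[OF Wc]) auto
    have co: "set_integrable lborel {0..t} (\<lambda>s. kk g A \<nu> (t - s) * \<phi> s)"
      "g \<bullet> Z t = (LINT s:{0..t}|lborel. kk g A \<nu> (t - s) * \<phi> s)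
        + \<sigma> * ((g \<bullet> \<nu>) * W t + integral {0..t} (\<lambda>s. W s * kk g A (blinfun_apply A \<nu>) (t - s)))"
      using core[OF t0 FintT Zintt _ _ Wct, where \<sigma>=\<sigma> and \<phi>=\<phi> and g=g and A=A and \<nu>=\<nu>] Zeq t Fdef by auto
    obtain I where I: "has_stoch_integral (\<lambda>s. K (t - s)) W 0 t I"
      and Xt: "X t = X0 + (LINT s:{0..t}|lborel. K (t - s) * (\<alpha> * u s - \<beta> * X s)) + \<sigma> * I"
      and Xi: "set_integrable lborel {0..t} (\<lambda>s. K (t - s) * (\<alpha> * u s - \<beta> * X s))"
      using X_sol t by blast
    have ibp: "has_stoch_integral (\<lambda>s. kk g A \<nu> (t - s)) W 0 t
        (W t * kk g A \<nu> (t - t) - W 0 * kk g A \<nu> (t - 0) - integral {0..t} (\<lambda>s. W s * - kk g A (blinfun_apply A \<nu>) (t - s)))"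
    proof (rule stoch_ibp[OF t0 Wct])
      fix s
      have d: "((\<lambda>s. t - s) has_real_derivative -1) (at s)"
        by (auto intro!: derivative_eq_intros)
      show "((\<lambda>s. kk g A \<nu> (t - s)) has_real_derivative - kk g A (blinfun_apply A \<nu>) (t - s)) (at s)"
        using DERIV_chain2[of "kk g A \<nu>" _ "\<lambda>s. t - s" s, OF kk_deriv d] by simp
    next
      show "continuous_on {0..t} (\<lambda>s. - kk g A (blinfun_apply A \<nu>) (t - s))"
        by (intro continuous_on_compose2[OF kk_cont[of UNIV]] continuous_intros) auto
    qed
    have Ival: "I = (g \<bullet> \<nu>) * W t + integral {0..t} (\<lambda>s. W s * kk g A (blinfun_apply A \<nu>) (t - s))"
      using stoch_unique[OF I[unfolded Kk] ibp t0] W0 by (simp add: kk_zero)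
    have Yt: "Y t = c0 + (LINT s:{0..t}|lborel. kk g A \<nu> (t - s) * \<phi> s) + \<sigma> * I"
      using co(2) Ival by (simp add: Y_def)
    have Xi': "set_integrable lborel {0..t} (\<lambda>s. kk g A \<nu> (t - s) * (\<alpha> * u s - \<beta> * X s))"
      using Xi by (simp add: Kk)
    have Di: "set_integrable lborel {0..t} (\<lambda>s. kk g A \<nu> (t - s) * (\<alpha> * u s - \<beta> * X s) - kk g A \<nu> (t - s) * \<phi> s)"
      by (rule set_integral_diff(1)[OF Xi' co(1)])
    have eqf: "kk g A \<nu> (t - s) * (\<alpha> * u s - \<beta> * X s) - kk g A \<nu> (t - s) * \<phi> s = - \<beta> * (kk g A \<nu> (t - s) * D s)" for s
      by (simp add: \<phi>_def D_def Y_def algebra_simps)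
    have Di2: "set_integrable lborel {0..t} (\<lambda>s. - \<beta> * (kk g A \<nu> (t - s) * D s))"
      using Di by (simp only: eqf)
    have Di3: "set_integrable lborel {0..t} (\<lambda>s. kk g A \<nu> (t - s) * D s)"
    proof -
      have "set_integrable lborel {0..t} (\<lambda>s. (- 1 / \<beta>) * (- \<beta> * (kk g A \<nu> (t - s) * D s)))"
        using Di2 by (rule set_integrable_mult_right)
      then show ?thesis using \<beta>_pos by simp
    qed
    have "D t = (LINT s:{0..t}|lborel. kk g A \<nu> (t - s) * (\<alpha> * u s - \<beta> * X s)) - (LINT s:{0..t}|lborel. kk g A \<nu> (t - s) * \<phi> s)"
      using Xt Yt c0X by (simp add: D_def Kk)
    also have "\<dots> = (LINT s:{0..t}|lborel. - \<beta> * (kk g A \<nu> (t - s) * D s))"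
      using set_integral_diff(2)[OF Xi' co(1)] by (simp only: eqf)
    also have "\<dots> = - \<beta> * (LINT s:{0..t}|lborel. kk g A \<nu> (t - s) * D s)" by (rule set_integral_mult_right)
    finally show ?thesis using Di3 by simp
  qed
  define L where "L = \<beta> * (norm g * exp (T * norm A))"
  have L0: "L \<ge> 0" unfolding L_def using \<beta>_pos by simp
  have Kb: "\<bar>kk g A \<nu> \<tau>\<bar> \<le> norm g * exp (T * norm A)" if "\<bar>\<tau>\<bar> \<le> T" for \<tau>
  proof -
    have "\<bar>kk g A \<nu> \<tau>\<bar> \<le> norm g * norm \<nu> * exp (\<bar>\<tau>\<bar> * norm A)" by (rule kk_bound)
    also have "\<dots> \<le> norm g * norm \<nu> * exp (T * norm A)"
      using that by (intro mult_left_mono) (auto intro: mult_right_mono)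
    finally show ?thesis using \<nu>_norm by simp
  qed
  have gZ: "set_integrable lborel {0..T} (\<lambda>s. g \<bullet> Z s)"
    by (rule set_integral_blin(1)[OF bounded_linear_inner_right Zint])
  have cI: "set_integrable lborel {0..T} (\<lambda>s. c0)"
    by (rule borel_integrable_atLeastAtMost') (rule continuous_on_const)
  have Dint: "set_integrable lborel {0..T} D"
    unfolding D_def Y_def
    by (intro set_integral_diff(1)[OF Xint] set_integral_add(1)[OF cI gZ])
  have bnd: "\<bar>D t\<bar> \<le> L * (LINT s:{0..t}|lborel. \<bar>D s\<bar>)" if t: "t \<in> {0..T}" for t
  proof -
    have Dt: "set_integrable lborel {0..t} D" by (rule set_integrable_subset[OF Dint]) (use t in auto)
    have "\<bar>D t\<bar> = \<beta> * \<bar>LINT s:{0..t}|lborel. kk g A \<nu> (t - s) * D s\<bar>"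
      using Deq[OF t] \<beta>_pos by (simp add: abs_mult)
    also have "\<dots> \<le> \<beta> * (LINT s:{0..t}|lborel. \<bar>kk g A \<nu> (t - s) * D s\<bar>)"
      using \<beta>_pos by (intro mult_left_mono set_int_abs_bound) auto
    also have "(LINT s:{0..t}|lborel. \<bar>kk g A \<nu> (t - s) * D s\<bar>) \<le> (LINT s:{0..t}|lborel. (norm g * exp (T * norm A)) * \<bar>D s\<bar>)"
    proof (rule set_integral_mono)
      show "set_integrable lborel {0..t} (\<lambda>s. \<bar>kk g A \<nu> (t - s) * D s\<bar>)"
        by (rule set_integrable_abs) (use Deq[OF t] in blast)
      show "set_integrable lborel {0..t} (\<lambda>s. norm g * exp (T * norm A) * \<bar>D s\<bar>)"
        using set_integrable_abs[OF Dt] by simp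
      fix s assume s: "s \<in> {0..t}"
      have "\<bar>kk g A \<nu> (t - s)\<bar> \<le> norm g * exp (T * norm A)" by (rule Kb) (use s t in auto)
      then show "\<bar>kk g A \<nu> (t - s) * D s\<bar> \<le> norm g * exp (T * norm A) * \<bar>D s\<bar>"
        by (simp add: abs_mult mult_right_mono)
    qed
    finally show ?thesis using \<beta>_pos by (simp add: L_def mult_left_mono mult.assoc)
  qed
  show ?thesis
  proof
    fix t assume t: "t \<in> {0..T}"
    have "D t = 0" by (rule gronwall0[OF Dint L0 bnd t])
    then show "X t = g \<bullet> \<zeta>0 + g \<bullet> Z t" by (simp add: D_def Y_def c0_def)
  qed
qed

theorem theorem2p2:
  fixes M :: "'w measure" and W :: "'w \<Rightarrow> real \<Rightarrow> real"
    and T \<alpha> \<beta> \<sigma> X0 :: real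
    and g \<nu> \<zeta>0 :: "'h::{real_inner, banach, second_countable_topology}"
    and A :: "'h \<Rightarrow>\<^sub>L 'h"
    and K :: "real \<Rightarrow> real"
    and u X :: "'w \<Rightarrow> real \<Rightarrow> real"
    and Z :: "'w \<Rightarrow> real \<Rightarrow> 'h"
  assumes T_pos: "T > 0" and \<alpha>_pos: "\<alpha> > 0" and \<beta>_pos: "\<beta> > 0" and \<sigma>_pos: "\<sigma> > 0"
    and BM: "std_brownian_motion M W"
    and g_nz: "g \<noteq> 0" and \<nu>_norm: "norm \<nu> = 1"
    and K_def: "\<forall>t. K t = g \<bullet> blinfun_apply (op_exp (t *\<^sub>R A)) \<nu>"
    and u_L2a: "L2a M W T u"
    and X_sol: "AE w in M. set_integrable lborel {0..T} (X w) \<and>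
       (\<forall>t\<in>{0..T}.
          set_integrable lborel {0..t} (\<lambda>s. K (t - s) * (\<alpha> * u w s - \<beta> * X w s)) \<and>
          (\<exists>I. has_stoch_integral (\<lambda>s. K (t - s)) (W w) 0 t I \<and>
               X w t = X0 + (LINT s:{0..t}|lborel. K (t - s) * (\<alpha> * u w s - \<beta> * X w s))
                       + \<sigma> * I))"
    and \<zeta>0_def: "\<zeta>0 = (X0 / (norm g)\<^sup>2) *\<^sub>R g"
    and Z_sol: "AE w in M. set_integrable lborel {0..T} (Z w) \<and>
       (\<forall>t\<in>{0..T}.
          set_integrable lborel {0..t}
            (\<lambda>s. (blinfun_apply A (Z w s) - (\<beta> * (g \<bullet> Z w s)) *\<^sub>R \<nu>)
                 - (\<beta> * (g \<bullet> \<zeta>0)) *\<^sub>R \<nu> + (\<alpha> * u w s) *\<^sub>R \<nu>) \<and>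
          (\<exists>I. has_stoch_integral (\<lambda>s. \<sigma> *\<^sub>R \<nu>) (W w) 0 t I \<and>
               Z w t = (LINT s:{0..t}|lborel.
                          (blinfun_apply A (Z w s) - (\<beta> * (g \<bullet> Z w s)) *\<^sub>R \<nu>)
                          - (\<beta> * (g \<bullet> \<zeta>0)) *\<^sub>R \<nu> + (\<alpha> * u w s) *\<^sub>R \<nu>) + I))"
  shows "AE w in M. \<forall>t\<in>{0..T}. X w t = g \<bullet> \<zeta>0 + g \<bullet> Z w t"
  proof -
  have BMae: "AE w in M. W w 0 = 0 \<and> continuous_on {0..} (W w)"
    using BM unfolding std_brownian_motion_def by blast
  show ?thesis
    using X_sol Z_sol BMae
  proof eventually_elim
    case (elim w)
    show ?case
      by (rule pathwise[where X = "X w" and u = "u w" and W = "W w" and Z = "Z w",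
            OF T_pos \<beta>_pos g_nz \<nu>_norm K_def _ _ _ \<zeta>0_def])
         (use elim in blast)+
  qed
qed

end
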